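(* Let $X=\prod_{i=1}^n X_i$ be a finite set and $\langle\mathcal A,\mathcal U\rangle$ a linear twofold partition of $X$ (satisfying the standing assumptions). Then $\langle\mathcal A,\mathcal U\rangle$ has a representation in Model $F^{\underline u}$ if and only if $\mathcal A_*$ is a maximal antichain of the poset $(X,\succsim)$.
   Context: Setting. $N=\{1,\dots,n\}$, $n\ge2$. $(y_i,x_{-i})$ denotes $x$ with $i$-th coordinate replaced by $y_i$; $a_{-i}$ ranges over $\prod_{j\ne i}X_j$. A twofold partition $\langle\mathcal A,\mathcal U\rangle$ of $X$: disjoint sets with union $X$. Define $x_i\succsim_i y_i$ iff [for all $a_{-i}$, $(y_i,a_{-i})\in\mathcal A\Rightarrow(x_i,a_{-i})\in\mathcal A$]. Standing assumptions: every attribute is influential (exist $x_i,y_i,a_{-i}$ with $(x_i,a_{-i})\in\mathcal A$, $(y_i,a_{-i})\in\mathcal U$) and each $\succsim_i$ is antisymmetric. Linear: for all $i$, $x_i,y_i$, $a_{-i},b_{-i}$, if $(x_i,a_{-i})\in\mathcal A$ and $(y_i,b_{-i})\in\mathcal A$ then $(y_i,a_{-i})\in\mathcal A$ or $(x_i,b_{-i})\in\mathcal A$ (equivalently, each $\succsim_i$ is complete, hence a linear order here). $x\succsim y$ iff $x_i\succsim_i y_i$ for all $i$ (a partial order on $X$), with asymmetric part $\succ$. $\mathcal A_*$ is the set of minimal elements of $\mathcal A$ for $\succsim$. An antichain is a set of pairwise $\succsim$-incomparable elements; it is maximal if no element of $X$ can be added to it keeping it an antichain. Model $F^{u}$: there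 are semiorders $S_i$ on $X_i$ (reflexive, Ferrers: $xS_iy, zS_iw\Rightarrow xS_iw$ or $zS_iy$; semitransitive: $xS_iy, yS_iz\Rightarrow xS_iw$ or $wS_iz$), the relation $S$ on $X$ given by $xSy$ iff $x_iS_iy_i$ for all $i\in N$ with asymmetric part $P$, and a set $\mathcal P\subseteq X$ with no $p,q\in\mathcal P$ satisfying $pPq$, such that for all $x$: $x\in\mathcal U$ iff [$pPx$ for some $p\in\mathcal P$ and not $xPq$ for all $q\in\mathcal P$]. Model $F^{\underline u}$: Model $F^{u}$ with a representation in which $S_i=\succsim_i$ for all $i$ (so $S=\succsim$, $P=\succ$). *)

theory Defs
  imports Main "HOL-Library.FuncSet"
begin

text \<open>Attributes are indexed by N = {1..n}; the attribute sets are Xs i.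
  Alternatives are functions x :: nat => 'a in X = PiE {1..n} Xs.
  (y_i, a_{-i}) is written a(i := y) with a in X.\<close>

definition prodX :: "nat \<Rightarrow> (nat \<Rightarrow> 'a set) \<Rightarrow> (nat \<Rightarrow> 'a) set" where
  "prodX n Xs = PiE {1..n} Xs"

definition twofold_partition :: "nat \<Rightarrow> (nat \<Rightarrow> 'a set) \<Rightarrow> (nat \<Rightarrow> 'a) set \<Rightarrow> (nat \<Rightarrow> 'a) set \<Rightarrow> bool" where
  "twofold_partition n Xs A U \<longleftrightarrow> A \<inter> U = {} \<and> A \<union> U = prodX n Xs"

definition attr_ge :: "nat \<Rightarrow> (nat \<Rightarrow> 'a set) \<Rightarrow> (nat \<Rightarrow> 'a) set \<Rightarrow> nat \<Rightarrow> 'a \<Rightarrow> 'a \<Rightarrow> bool" where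
  "attr_ge n Xs A i x y \<longleftrightarrow> (\<forall>a\<in>prodX n Xs. a(i := y) \<in> A \<longrightarrow> a(i := x) \<in> A)"

definition influential :: "nat \<Rightarrow> (nat \<Rightarrow> 'a set) \<Rightarrow> (nat \<Rightarrow> 'a) set \<Rightarrow> (nat \<Rightarrow> 'a) set \<Rightarrow> nat \<Rightarrow> bool" where
  "influential n Xs A U i \<longleftrightarrow>
     (\<exists>x\<in>Xs i. \<exists>y\<in>Xs i. \<exists>a\<in>prodX n Xs. a(i := x) \<in> A \<and> a(i := y) \<in> U)"

definition standing_assumptions :: "nat \<Rightarrow> (nat \<Rightarrow> 'a set) \<Rightarrow> (nat \<Rightarrow> 'a) set \<Rightarrow> (nat \<Rightarrow> 'a) set \<Rightarrow> bool" where
  "standing_assumptions n Xs A U \<longleftrightarrow>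
     (\<forall>i\<in>{1..n}. influential n Xs A U i) \<and>
     (\<forall>i\<in>{1..n}. \<forall>x\<in>Xs i. \<forall>y\<in>Xs i.
        attr_ge n Xs A i x y \<and> attr_ge n Xs A i y x \<longrightarrow> x = y)"

definition linear_partition :: "nat \<Rightarrow> (nat \<Rightarrow> 'a set) \<Rightarrow> (nat \<Rightarrow> 'a) set \<Rightarrow> bool" where
  "linear_partition n Xs A \<longleftrightarrow>
     (\<forall>i\<in>{1..n}. \<forall>x\<in>Xs i. \<forall>y\<in>Xs i. \<forall>a\<in>prodX n Xs. \<forall>b\<in>prodX n Xs.
        a(i := x) \<in> A \<and> b(i := y) \<in> A \<longrightarrow> a(i := y) \<in> A \<or> b(i := x) \<in> A)"

definition dom_ge :: "nat \<Rightarrow> (nat \<Rightarrow> 'a set) \<Rightarrow> (nat \<Rightarrow> 'a) set \<Rightarrow> (nat \<Rightarrow> 'a) \<Rightarrow> (nat \<Rightarrow> 'a) \<Rightarrow> bool" where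
  "dom_ge n Xs A x y \<longleftrightarrow> (\<forall>i\<in>{1..n}. attr_ge n Xs A i (x i) (y i))"

definition dom_gt :: "nat \<Rightarrow> (nat \<Rightarrow> 'a set) \<Rightarrow> (nat \<Rightarrow> 'a) set \<Rightarrow> (nat \<Rightarrow> 'a) \<Rightarrow> (nat \<Rightarrow> 'a) \<Rightarrow> bool" where
  "dom_gt n Xs A x y \<longleftrightarrow> dom_ge n Xs A x y \<and> \<not> dom_ge n Xs A y x"

definition minimal_A :: "nat \<Rightarrow> (nat \<Rightarrow> 'a set) \<Rightarrow> (nat \<Rightarrow> 'a) set \<Rightarrow> (nat \<Rightarrow> 'a) set" where
  "minimal_A n Xs A = {x \<in> A. \<not> (\<exists>y\<in>A. dom_gt n Xs A x y)}"

definition antichain_in :: "(nat \<Rightarrow> 'a) set \<Rightarrow> ((nat \<Rightarrow> 'a) \<Rightarrow> (nat \<Rightarrow> 'a) \<Rightarrow> bool) \<Rightarrow> (nat \<Rightarrow> 'a) set \<Rightarrow> bool" where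
  "antichain_in X R S \<longleftrightarrow> S \<subseteq> X \<and> (\<forall>x\<in>S. \<forall>y\<in>S. x \<noteq> y \<longrightarrow> \<not> R x y \<and> \<not> R y x)"

definition maximal_antichain_in :: "(nat \<Rightarrow> 'a) set \<Rightarrow> ((nat \<Rightarrow> 'a) \<Rightarrow> (nat \<Rightarrow> 'a) \<Rightarrow> bool) \<Rightarrow> (nat \<Rightarrow> 'a) set \<Rightarrow> bool" where
  "maximal_antichain_in X R S \<longleftrightarrow> antichain_in X R S \<and>
     (\<forall>z\<in>X - S. \<not> antichain_in X R (insert z S))"

definition semiorder_on :: "'a set \<Rightarrow> ('a \<Rightarrow> 'a \<Rightarrow> bool) \<Rightarrow> bool" where
  "semiorder_on D R \<longleftrightarrow>
     (\<forall>x\<in>D. R x x) \<and>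
     (\<forall>x\<in>D. \<forall>y\<in>D. \<forall>z\<in>D. \<forall>w\<in>D. R x y \<and> R z w \<longrightarrow> R x w \<or> R z y) \<and>
     (\<forall>x\<in>D. \<forall>y\<in>D. \<forall>z\<in>D. \<forall>w\<in>D. R x y \<and> R y z \<longrightarrow> R x w \<or> R w z)"

definition Fu_rep :: "nat \<Rightarrow> (nat \<Rightarrow> 'a set) \<Rightarrow> (nat \<Rightarrow> 'a) set \<Rightarrow> (nat \<Rightarrow> 'a) set
     \<Rightarrow> (nat \<Rightarrow> 'a \<Rightarrow> 'a \<Rightarrow> bool) \<Rightarrow> (nat \<Rightarrow> 'a) set \<Rightarrow> bool" where
  "Fu_rep n Xs A U S P \<longleftrightarrow>
     (let X = prodX n Xs;
          SS = (\<lambda>x y. \<forall>i\<in>{1..n}. S i (x i) (y i));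
          PP = (\<lambda>x y. SS x y \<and> \<not> SS y x)
      in (\<forall>i\<in>{1..n}. semiorder_on (Xs i) (S i)) \<and>
         P \<subseteq> X \<and>
         (\<forall>p\<in>P. \<forall>q\<in>P. \<not> PP p q) \<and>
         (\<forall>x\<in>X. x \<in> U \<longleftrightarrow> (\<exists>p\<in>P. PP p x) \<and> (\<forall>q\<in>P. \<not> PP x q)))"

definition model_Fu_under :: "nat \<Rightarrow> (nat \<Rightarrow> 'a set) \<Rightarrow> (nat \<Rightarrow> 'a) set \<Rightarrow> (nat \<Rightarrow> 'a) set \<Rightarrow> bool" where
  "model_Fu_under n Xs A U \<longleftrightarrow> (\<exists>P. Fu_rep n Xs A U (\<lambda>i. attr_ge n Xs A i) P)"

end

theory Submission
  imports Defs
begin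

lemma attr_trans: "attr_ge n Xs A i x y \<Longrightarrow> attr_ge n Xs A i y z \<Longrightarrow> attr_ge n Xs A i x z"
  unfolding attr_ge_def by blast

lemma attr_refl: "attr_ge n Xs A i x x"
  unfolding attr_ge_def by blast

lemma dom_refl: "dom_ge n Xs A x x"
  unfolding dom_ge_def attr_ge_def by blast

lemma dom_trans: "dom_ge n Xs A x y \<Longrightarrow> dom_ge n Xs A y z \<Longrightarrow> dom_ge n Xs A x z"
  unfolding dom_ge_def using attr_trans by metis

lemma gt_trans1: "dom_gt n Xs A x y \<Longrightarrow> dom_ge n Xs A y z \<Longrightarrow> dom_gt n Xs A x z"
  unfolding dom_gt_def using dom_trans by metis

lemma gt_trans2: "dom_ge n Xs A x y \<Longrightarrow> dom_gt n Xs A y z \<Longrightarrow> dom_gt n Xs A x z"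
  unfolding dom_gt_def using dom_trans by metis

lemma upclosed:
  assumes AX: "A \<subseteq> prodX n Xs" and xA: "x \<in> A" and yX: "y \<in> prodX n Xs"
    and ge: "dom_ge n Xs A y x"
  shows "y \<in> A"
proof -
  have xX: "x \<in> prodX n Xs" using AX xA by blast
  define z where "z = (\<lambda>k j. if 1 \<le> j \<and> j \<le> k then y j else x j)"
  have zX: "z k \<in> prodX n Xs" for k
    using xX yX unfolding z_def prodX_def PiE_def Pi_def extensional_def by auto
  have "k \<le> n \<Longrightarrow> z k \<in> A" for k
  proof (induction k)
    case 0
    have "z 0 = x" unfolding z_def by auto
    then show ?case using xA by simp
  next
    case (Suc k)
    have e1: "z (Suc k) = (z k)(Suc k := y (Suc k))"
      unfolding z_def by (rule ext) auto
    have e2: "z k = (z k)(Suc k := x (Suc k))"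
      unfolding z_def by (rule ext) auto
    have "attr_ge n Xs A (Suc k) (y (Suc k)) (x (Suc k))"
      using ge Suc.prems unfolding dom_ge_def by auto
    then have "(z k)(Suc k := x (Suc k)) \<in> A \<longrightarrow> (z k)(Suc k := y (Suc k)) \<in> A"
      unfolding attr_ge_def using zX by blast
    moreover have "(z k)(Suc k := x (Suc k)) \<in> A" using Suc e2 by (metis Suc_leD)
    ultimately show ?case unfolding e1 by blast
  qed
  moreover have "z n = y"
  proof (rule ext)
    fix j show "z n j = y j"
      using xX yX unfolding z_def prodX_def PiE_def extensional_def by auto
  qed
  ultimately show ?thesis by force
qed

lemma dom_antisym:
  assumes SA: "standing_assumptions n Xs A U"
    and xX: "x \<in> prodX n Xs" and yX: "y \<in> prodX n Xs"
    and "dom_ge n Xs A x y" "dom_ge n Xs A y x"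
  shows "x = y"
proof (rule ext)
  fix j
  show "x j = y j"
  proof (cases "j \<in> {1..n}")
    case True
    then have "x j \<in> Xs j" "y j \<in> Xs j" using xX yX unfolding prodX_def by auto
    then show ?thesis using SA assms(4,5) True
      unfolding standing_assumptions_def dom_ge_def by blast
  next
    case False
    then show ?thesis using xX yX unfolding prodX_def PiE_def extensional_def by auto
  qed
qed

lemma exists_minimal:
  assumes fin: "finite (prodX n Xs)" and AX: "A \<subseteq> prodX n Xs" and xA: "x \<in> A"
  shows "\<exists>m\<in>minimal_A n Xs A. dom_ge n Xs A x m"
proof -
  define f where "f y = card {z\<in>A. dom_gt n Xs A y z}" for y
  let ?P = "\<lambda>y. y \<in> A \<and> dom_ge n Xs A x y"
  have "?P x" using xA dom_refl by blast
  then obtain y where Py: "?P y" and ymin: "\<forall>w. ?P w \<longrightarrow> f y \<le> f w"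
    using ex_has_least_nat[of ?P x f] by blast
  have "y \<in> minimal_A n Xs A"
  proof (rule ccontr)
    assume "y \<notin> minimal_A n Xs A"
    then obtain w where wA: "w \<in> A" and gt: "dom_gt n Xs A y w"
      using Py unfolding minimal_A_def by blast
    have Pw: "?P w" using wA Py gt dom_trans unfolding dom_gt_def by blast
    have finA: "finite A" using fin AX finite_subset by blast
    have sub: "{z\<in>A. dom_gt n Xs A w z} \<subset> {z\<in>A. dom_gt n Xs A y z}"
    proof
      show "{z\<in>A. dom_gt n Xs A w z} \<subseteq> {z\<in>A. dom_gt n Xs A y z}"
        using gt gt_trans1 dom_gt_def by blast
      have "w \<notin> {z\<in>A. dom_gt n Xs A w z}" unfolding dom_gt_def by blast
      then show "{z\<in>A. dom_gt n Xs A w z} \<noteq> {z\<in>A. dom_gt n Xs A y z}"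
        using wA gt by blast
    qed
    have "f w < f y" unfolding f_def
      by (rule psubset_card_mono) (use finA sub in auto)
    then show False using ymin Pw by force
  qed
  then show ?thesis using Py by blast
qed

lemma attr_complete:
  assumes LP: "linear_partition n Xs A" and i: "i \<in> {1..n}"
    and x: "x \<in> Xs i" and y: "y \<in> Xs i"
  shows "attr_ge n Xs A i x y \<or> attr_ge n Xs A i y x"
  using LP i x y unfolding linear_partition_def attr_ge_def by blast

lemma semiorder_from_complete:
  assumes refl: "\<And>x. R x x" and tr: "\<And>x y z. R x y \<Longrightarrow> R y z \<Longrightarrow> R x z"
    and c: "\<And>x y. x \<in> D \<Longrightarrow> y \<in> D \<Longrightarrow> R x y \<or> R y x"
  shows "semiorder_on D R"
  unfolding semiorder_on_def
proof (intro conjI ballI impI)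
  show "R x x" for x using refl .
next
  fix x y z w assume "x \<in> D" "y \<in> D" "z \<in> D" "w \<in> D" and h: "R x y \<and> R z w"
  show "R x w \<or> R z y"
  proof (cases "R x w")
    case False
    then have "R w x" using c \<open>x \<in> D\<close> \<open>w \<in> D\<close> by blast
    then have "R z y" using h tr by blast
    then show ?thesis by blast
  qed simp
next
  fix x y z w assume "x \<in> D" "y \<in> D" "z \<in> D" "w \<in> D" and h: "R x y \<and> R y z"
  show "R x w \<or> R w z"
  proof (cases "R x w")
    case False
    then have "R w x" using c \<open>x \<in> D\<close> \<open>w \<in> D\<close> by blast
    then have "R w z" using h tr by blast
    then show ?thesis by blast
  qed simp
qed

theorem theorem2:
  fixes n :: nat and Xs :: "nat \<Rightarrow> 'a set" and A U :: "(nat \<Rightarrow> 'a) set"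
  assumes "n \<ge> 2"
    and "finite (prodX n Xs)"
    and "twofold_partition n Xs A U"
    and "standing_assumptions n Xs A U"
    and "linear_partition n Xs A"
  shows "model_Fu_under n Xs A U \<longleftrightarrow>
           maximal_antichain_in (prodX n Xs) (dom_ge n Xs A) (minimal_A n Xs A)"
proof -
  let ?X = "prodX n Xs"
  let ?ge = "dom_ge n Xs A"
  let ?gt = "dom_gt n Xs A"
  let ?M = "minimal_A n Xs A"
  have AX: "A \<subseteq> ?X" and UX: "U \<subseteq> ?X" and AU: "A \<inter> U = {}" and XAU: "?X = A \<union> U"
    using assms(3) unfolding twofold_partition_def by auto
  have fin: "finite ?X" using assms(2) .
  have SA: "standing_assumptions n Xs A U" using assms(4) .
  have MA: "?M \<subseteq> A" unfolding minimal_A_def by blast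
  have *: "\<not> ?ge u v" if uM: "u \<in> ?M" and vM: "v \<in> ?M" and une: "u \<noteq> v" for u v
  proof
    assume g: "?ge u v"
    have uX: "u \<in> ?X" and vX: "v \<in> ?X" using uM vM MA AX by auto
    have "\<not> ?ge v u" using dom_antisym[OF SA uX vX g] une by blast
    then have "?gt u v" using g unfolding dom_gt_def by blast
    then show False using uM vM MA unfolding minimal_A_def by blast
  qed
  have anti: "antichain_in ?X ?ge ?M"
    unfolding antichain_in_def using * MA AX by blast
  have SSeq: "(\<lambda>x y. \<forall>i\<in>{1..n}. attr_ge n Xs A i (x i) (y i)) = ?ge"
    unfolding dom_ge_def by blast
  have PPeq: "(\<lambda>x y. ?ge x y \<and> \<not> ?ge y x) = ?gt"
    unfolding dom_gt_def by blast
  have rep_iff: "Fu_rep n Xs A U (\<lambda>i. attr_ge n Xs A i) P \<longleftrightarrow>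
      (\<forall>i\<in>{1..n}. semiorder_on (Xs i) (attr_ge n Xs A i)) \<and> P \<subseteq> ?X \<and>
      (\<forall>p\<in>P. \<forall>q\<in>P. \<not> ?gt p q) \<and>
      (\<forall>x\<in>?X. x \<in> U \<longleftrightarrow> (\<exists>p\<in>P. ?gt p x) \<and> (\<forall>q\<in>P. \<not> ?gt x q))" for P
    unfolding Fu_rep_def Let_def SSeq PPeq dom_gt_def by (rule refl)
  show ?thesis
  proof
    assume "model_Fu_under n Xs A U"
    then obtain P where "Fu_rep n Xs A U (\<lambda>i. attr_ge n Xs A i) P"
      unfolding model_Fu_under_def by blast
    note R = this[unfolded rep_iff]
    have PX: "P \<subseteq> ?X" using R by (elim conjE)
    have Panti: "\<forall>p\<in>P. \<forall>q\<in>P. \<not> ?gt p q" using R by (elim conjE)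
    have Uc: "\<forall>x\<in>?X. x \<in> U \<longleftrightarrow> (\<exists>p\<in>P. ?gt p x) \<and> (\<forall>q\<in>P. \<not> ?gt x q)"
      using R by (elim conjE)
    have PA: "P \<subseteq> A"
    proof
      fix p assume pP: "p \<in> P"
      have pX: "p \<in> ?X" using PX pP by blast
      have "\<not> (\<exists>p'\<in>P. ?gt p' p)" using Panti pP by blast
      then have "p \<notin> U" using Uc pX by blast
      then show "p \<in> A" using pP PX XAU by blast
    qed
    have Mnot: "\<not> ?gt p m" if pP: "p \<in> P" and mM: "m \<in> ?M" for p m
    proof
      assume g: "?gt p m"
      have mX: "m \<in> ?X" using mM MA AX by blast
      have "m \<notin> U" using mM MA AU by blast
      then obtain q where qP: "q \<in> P" and mq: "?gt m q" using Uc mX pP g by blast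
      have "q \<in> A" using qP PA by blast
      then obtain m' where m'M: "m' \<in> ?M" and qm': "?ge q m'"
        using exists_minimal[OF fin AX] by blast
      have "?gt m m'" using gt_trans1[OF mq qm'] .
      then show False using mM m'M MA unfolding minimal_A_def by blast
    qed
    show "maximal_antichain_in ?X ?ge ?M"
      unfolding maximal_antichain_in_def
    proof (intro conjI ballI)
      show "antichain_in ?X ?ge ?M" using anti .
    next
      fix z assume zX: "z \<in> ?X - ?M"
      have "\<exists>m\<in>?M. m \<noteq> z \<and> (?ge z m \<or> ?ge m z)"
      proof (cases "z \<in> A")
        case True
        then obtain m where m1: "m \<in> ?M" and m2: "?ge z m" using exists_minimal[OF fin AX] by blast
        have "m \<noteq> z" using zX m1 by auto
        then show ?thesis using m1 m2 by auto
      next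
        case False
        then have "z \<in> U" using zX XAU by blast
        then obtain p where pP: "p \<in> P" and pz: "?gt p z" using Uc zX by blast
        obtain m where mM: "m \<in> ?M" and pm: "?ge p m"
          using exists_minimal[OF fin AX] pP PA by blast
        have pX: "p \<in> ?X" "m \<in> ?X" using pP PX mM MA AX by auto
        have "p = m"
        proof (rule ccontr)
          assume "p \<noteq> m"
          then have "\<not> ?ge m p" using dom_antisym[OF SA pX pm] by blast
          then show False using Mnot[OF pP mM] pm unfolding dom_gt_def by blast
        qed
        moreover have "m \<noteq> z" using zX mM by auto
        ultimately show ?thesis using mM pz unfolding dom_gt_def by auto
      qed
      then show "\<not> antichain_in ?X ?ge (insert z ?M)"
        unfolding antichain_in_def by blast
    qed
  next
    assume max: "maximal_antichain_in ?X ?ge ?M"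
    have semi: "\<forall>i\<in>{1..n}. semiorder_on (Xs i) (attr_ge n Xs A i)"
    proof
      fix i assume i: "i \<in> {1..n}"
      note c = attr_complete[OF assms(5) i]
      show "semiorder_on (Xs i) (attr_ge n Xs A i)"
        by (rule semiorder_from_complete[OF attr_refl attr_trans c])
    qed
    have "Fu_rep n Xs A U (\<lambda>i. attr_ge n Xs A i) ?M"
      unfolding rep_iff
    proof (intro conjI ballI)
      fix i assume "i \<in> {1..n}"
      then show "semiorder_on (Xs i) (attr_ge n Xs A i)" using semi by blast
    next
      show "?M \<subseteq> ?X" using MA AX by blast
    next
      fix p q assume "p \<in> ?M" "q \<in> ?M"
      then show "\<not> ?gt p q" unfolding minimal_A_def by blast
    next
      fix x assume xX: "x \<in> ?X"
      show "x \<in> U \<longleftrightarrow> (\<exists>p\<in>?M. ?gt p x) \<and> (\<forall>q\<in>?M. \<not> ?gt x q)"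
      proof
        assume xU: "x \<in> U"
        then have xA: "x \<notin> A" using AU by blast
        then have xM: "x \<in> ?X - ?M" using xX MA by blast
        then have "\<not> antichain_in ?X ?ge (insert x ?M)" using max
          unfolding maximal_antichain_in_def by blast
        then obtain p where pM: "p \<in> ?M" and "?ge x p \<or> ?ge p x"
          using anti xX xM unfolding antichain_in_def by blast
        moreover have "\<not> ?ge x p" using upclosed[OF AX _ xX] pM MA xA by blast
        ultimately have "?gt p x" unfolding dom_gt_def by blast
        moreover have "\<forall>q\<in>?M. \<not> ?gt x q"
          using upclosed[OF AX _ xX] MA xA unfolding dom_gt_def by blast
        ultimately show "(\<exists>p\<in>?M. ?gt p x) \<and> (\<forall>q\<in>?M. \<not> ?gt x q)" using pM by blast
      next
        assume h: "(\<exists>p\<in>?M. ?gt p x) \<and> (\<forall>q\<in>?M. \<not> ?gt x q)"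
        show "x \<in> U"
        proof (rule ccontr)
          assume "x \<notin> U"
          then have xA: "x \<in> A" using xX XAU by blast
          then obtain m where mM: "m \<in> ?M" and xm: "?ge x m"
            using exists_minimal[OF fin AX] by blast
          obtain p where pM: "p \<in> ?M" and px: "?gt p x" using h by blast
          show False
          proof (cases "x = m")
            case True
            then show False using px pM mM unfolding minimal_A_def by blast
          next
            case False
            have mX: "m \<in> ?X" using mM MA AX by blast
            have "\<not> ?ge m x" using dom_antisym[OF SA xX mX xm] False by blast
            then show False using h mM xm unfolding dom_gt_def by blast
          qed
        qed
      qed
    qed
    then show "model_Fu_under n Xs A U" unfolding model_Fu_under_def by blast
  qed
qed

end
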